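(* If $L$ is a homogeneous second-order Lagrangian on $\mathcal F^2_{(2)}E$, then $L=\tfrac12 i_i\vartheta^i$ (sum over $i\in\{1,2\}$), where $\vartheta^i$ are its Hilbert forms.
   Context: Let $E$ be a smooth manifold of dimension $n$ with local coordinates $(u^\alpha)$. For $k\ge 1$, $\mathcal F^k_{(2)}E$ denotes the bundle of $k$-th order 2-frames in $E$ (regular $k$-th order 2-velocities, i.e. $k$-jets at $0$ of maps $\mathbb R^2\to E$ of rank 2 at $0$), with induced coordinates $u^\alpha_{i_1\cdots i_s}$ ($0\le s\le k$, indices in $\{1,2\}$, totally symmetric in the subscripts). Pull-backs along the projections $\mathcal F^l_{(2)}E\to\mathcal F^k_{(2)}E$ are omitted. $\#(i_1\cdots i_s)$ denotes the number of distinct rearrangements of $(i_1,\dots,i_s)$; repeated indices in $\{1,2\}$ are summed. The total derivatives are the vector fields along $\mathcal F^{k+1}_{(2)}E\to\mathcal F^k_{(2)}E$ given by $\mathbf T_i=\sum_{s=0}^k \frac{1}{\#(i_1\cdots i_s)}u^\alpha_{i i_1\cdots i_s}\,\partial/\partial u^\alpha_{i_1\cdots i_s}$, and the vertical endomorphisms are the type $(1,1)$ tensor fields on $\mathcal F^{k+1}_{(2)}E$ given by $S^j=\sum_{s=0}^k \frac{s+1}{\#(i_1\cdots i_s)}\,\partial/\partial u^\alpha_{j i_1\cdots i_s}\otimes du^\alpha_{i_1\cdots i_s}$. The $S^i$ commute and $S^{i_1\cdots i_s}$ denotes their composite. On forms, $S^i$ acts as the degree-zero derivation $(S^i\omega)(X_1,\dots,X_r)=\sum_a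 \omega(X_1,\dots,S^iX_a,\dots,X_r)$ (zero on functions). The fundamental vector fields are $\Delta^{i_1\cdots i_s}_i=S^{i_1\cdots i_s}(\mathbf T_i)$, well-defined vector fields on $\mathcal F^{k+1}_{(2)}E$. Contraction with $\mathbf T_i$ and with $\Delta^{i_1\cdots i_s}_i$ is denoted $i_i$ and $i^{i_1\cdots i_s}_i$; the corresponding Lie derivatives are $d_i=d\,i_i+i_i\,d$ and $d^{i_1\cdots i_s}_i=d\,i^{i_1\cdots i_s}_i+i^{i_1\cdots i_s}_i d$. The $d_i$ commute and $d_{j_1\cdots j_s}$ denotes their composite. A second-order Lagrangian is a smooth function $L$ on (an open subset of) $\mathcal F^2_{(2)}E$; it is homogeneous if $d^i_jL=\delta^i_jL$ and $d^{ik}_jL=0$ for all $i,j,k$. Its Hilbert forms are the 1-forms $\vartheta^i=(S^i-\tfrac12 d_jS^{ji})\,dL$ on $\mathcal F^3_{(2)}E$. *)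

theory Defs
  imports "HOL-Analysis.Analysis"
begin

text \<open>Coordinate model of the (infinite) tower of 2-frame bundles over a coordinate
chart of E.  The fibre coordinate index 'a (a finite type) labels the coordinates u^alpha
of E (n = CARD('a)).  A symmetric multi-index (i_1 ... i_s) over {1,2} is encoded by
(p,q) = (number of 1's, number of 2's).  A point is a function assigning to every
coordinate (alpha,p,q) the value of u^alpha_{1^p 2^q}.  Objects living on F^k are
functions depending only on coordinates of order at most k.\<close>

type_synonym 'a coord = "'a \<times> nat \<times> nat"
type_synonym 'a point = "'a coord \<Rightarrow> real"

definition ord :: "'a coord \<Rightarrow> nat" where
  "ord c = (case c of (\<alpha>, p, q) \<Rightarrow> p + q)"

definition shift :: "nat \<Rightarrow> 'a coord \<Rightarrow> 'a coord" where
  "shift j c = (case c of (\<alpha>, p, q) \<Rightarrow> if j = 1 then (\<alpha>, Suc p, q) else (\<alpha>, p, Suc q))"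

text \<open>sum over all coordinates (only finitely many nonzero terms occur)\<close>
definition csum :: "('a coord \<Rightarrow> real) \<Rightarrow> real" where
  "csum g = sum g {c. g c \<noteq> 0}"

definition pd :: "'a coord \<Rightarrow> ('a point \<Rightarrow> real) \<Rightarrow> 'a point \<Rightarrow> real" where
  "pd c f x = deriv (\<lambda>t. f (x(c := t))) (x c)"

fun pds :: "'a coord list \<Rightarrow> ('a point \<Rightarrow> real) \<Rightarrow> 'a point \<Rightarrow> real" where
  "pds [] f = f"
| "pds (c # cs) f = pd c (pds cs f)"

definition smooth_on :: "'a point set \<Rightarrow> ('a point \<Rightarrow> real) \<Rightarrow> bool" where
  "smooth_on U f \<longleftrightarrow> (\<forall>cs. continuous_on U (pds cs f) \<and>
     (\<forall>c. \<forall>x\<in>U. (\<lambda>t. pds cs f (x(c := t))) differentiable (at (x c))))"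

definition depends_on_order :: "nat \<Rightarrow> ('a point \<Rightarrow> 'b) \<Rightarrow> bool" where
  "depends_on_order k f \<longleftrightarrow> (\<forall>x y. (\<forall>c. ord c \<le> k \<longrightarrow> x c = y c) \<longrightarrow> f x = f y)"

definition regular :: "'a point \<Rightarrow> bool" where
  "regular x \<longleftrightarrow> (\<forall>a b. (\<forall>\<alpha>. a * x (\<alpha>, 1, 0) + b * x (\<alpha>, 0, 1) = 0) \<longrightarrow> a = 0 \<and> b = 0)"

type_synonym 'a vfield = "'a point \<Rightarrow> 'a coord \<Rightarrow> real"
type_synonym 'a form1 = "'a point \<Rightarrow> 'a coord \<Rightarrow> real"
type_synonym 'a form2 = "'a point \<Rightarrow> 'a coord \<Rightarrow> 'a coord \<Rightarrow> real"

text \<open>total derivative T_i = sum u_{iI} d/du_I\<close>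
definition Tot :: "nat \<Rightarrow> 'a vfield" where
  "Tot i x c = x (shift i c)"

text \<open>vertical endomorphism S^j = sum (s+1) d/du_{jI} (x) du_I, as a matrix
  (coefficient of d/du_{c'} (x) du_c)\<close>
definition Smat :: "nat \<Rightarrow> 'a coord \<Rightarrow> 'a coord \<Rightarrow> real" where
  "Smat j c' c = (if c' = shift j c then real (ord c + 1) else 0)"

definition S_vec :: "nat \<Rightarrow> 'a vfield \<Rightarrow> 'a vfield" where
  "S_vec j X x c' = csum (\<lambda>c. Smat j c' c * X x c)"

definition S_form :: "nat \<Rightarrow> 'a form1 \<Rightarrow> 'a form1" where
  "S_form j \<omega> x c = csum (\<lambda>c'. \<omega> x c' * Smat j c' c)"

definition dfun :: "('a point \<Rightarrow> real) \<Rightarrow> 'a form1" where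
  "dfun f x c = pd c f x"

definition dform1 :: "'a form1 \<Rightarrow> 'a form2" where
  "dform1 \<omega> x a b = pd a (\<lambda>y. \<omega> y b) x - pd b (\<lambda>y. \<omega> y a) x"

definition contr1 :: "'a vfield \<Rightarrow> 'a form1 \<Rightarrow> 'a point \<Rightarrow> real" where
  "contr1 X \<omega> x = csum (\<lambda>c. \<omega> x c * X x c)"

definition contr2 :: "'a vfield \<Rightarrow> 'a form2 \<Rightarrow> 'a form1" where
  "contr2 X \<theta> x b = csum (\<lambda>a. X x a * \<theta> x a b)"

definition lie_fun :: "'a vfield \<Rightarrow> ('a point \<Rightarrow> real) \<Rightarrow> 'a point \<Rightarrow> real" where
  "lie_fun X f = contr1 X (dfun f)"

text \<open>Lie derivative of a 1-form along X: d i_X + i_X d\<close>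
definition lie_form :: "'a vfield \<Rightarrow> 'a form1 \<Rightarrow> 'a form1" where
  "lie_form X \<omega> x b = dfun (contr1 X \<omega>) x b + contr2 X (dform1 \<omega>) x b"

definition Delta1 :: "nat \<Rightarrow> nat \<Rightarrow> 'a vfield" where
  "Delta1 i j = S_vec i (Tot j)"

definition Delta2 :: "nat \<Rightarrow> nat \<Rightarrow> nat \<Rightarrow> 'a vfield" where
  "Delta2 i k j = S_vec i (S_vec k (Tot j))"

definition homogeneous_on :: "'a point set \<Rightarrow> ('a point \<Rightarrow> real) \<Rightarrow> bool" where
  "homogeneous_on U L \<longleftrightarrow>
     (\<forall>i\<in>{1,2}. \<forall>j\<in>{1,2}. \<forall>x\<in>U. lie_fun (Delta1 i j) L x = (if i = j then L x else 0)) \<and>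
     (\<forall>i\<in>{1,2}. \<forall>j\<in>{1,2}. \<forall>k\<in>{1,2}. \<forall>x\<in>U. lie_fun (Delta2 i k j) L x = 0)"

definition hilbert_form :: "('a point \<Rightarrow> real) \<Rightarrow> nat \<Rightarrow> 'a form1" where
  "hilbert_form L i x c = S_form i (dfun L) x c
     - (1/2) * (\<Sum>j\<in>{1,2}. lie_form (Tot j) (S_form j (S_form i (dfun L))) x c)"

text \<open>second-order Lagrangian on an open subset U of F^2_{(2)}E (U is the preimage of an
  open set of 2-frames, hence open and determined by coordinates of order <= 2)\<close>
definition second_order_lagrangian :: "'a point set \<Rightarrow> ('a point \<Rightarrow> real) \<Rightarrow> bool" where
  "second_order_lagrangian U L \<longleftrightarrow>
     open U \<and> depends_on_order 2 (\<lambda>x. x \<in> U) \<and> U \<subseteq> {x. regular x} \<and>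
     depends_on_order 2 L \<and> smooth_on U L"

end

theory Submission
  imports Defs
begin

definition Fs :: "'a coord set" where "Fs = {c. ord c \<le> 2}"

lemma finite_Fs: "finite (Fs :: ('a::finite) coord set)"
proof -
  have "Fs \<subseteq> (UNIV :: 'a set) \<times> ({..2} \<times> {..2})"
    by (auto simp: Fs_def ord_def)
  then show ?thesis by (rule finite_subset) auto
qed

lemma csum_eq: "finite F \<Longrightarrow> (\<And>c. c \<notin> F \<Longrightarrow> g c = 0) \<Longrightarrow> csum g = sum g F"
  unfolding csum_def by (rule sum.mono_neutral_left) auto

lemma csum_single: "(\<And>c. c \<noteq> d \<Longrightarrow> g c = 0) \<Longrightarrow> csum g = g d"
  using csum_eq[of "{d}" g] by auto

lemma ord_shift[simp]: "ord (shift j c) = Suc (ord c)"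
  by (cases c) (auto simp: ord_def shift_def)

lemma shift_comm: "shift i (shift j c) = shift j (shift i c)"
  by (cases c) (auto simp: shift_def)

lemma S_form_eq: "S_form j \<omega> x c = \<omega> x (shift j c) * real (ord c + 1)"
  unfolding S_form_def by (subst csum_single[where d="shift j c"]) (auto simp: Smat_def)

lemma pd_const: "pd c (\<lambda>y. k) x = 0"
  unfolding pd_def by (simp add: DERIV_imp_deriv)

lemma pd_zero: assumes "depends_on_order 2 f" "\<not> ord c \<le> 2" shows "pd c f x = 0"
proof -
  have "\<And>t. f (x(c := t)) = f x" using assms unfolding depends_on_order_def
    by (metis fun_upd_other)
  then show ?thesis unfolding pd_def by (simp add: DERIV_imp_deriv)
qed

lemma dep_pd: assumes "depends_on_order 2 f" shows "depends_on_order 2 (pd c f)"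
  unfolding depends_on_order_def
proof (intro allI impI)
  fix x y :: "'a point" assume h: "\<forall>c. ord c \<le> 2 \<longrightarrow> x c = y c"
  show "pd c f x = pd c f y"
  proof (cases "ord c \<le> 2")
    case True
    have "\<And>t. f (x(c := t)) = f (y(c := t))" using assms h unfolding depends_on_order_def
      by (metis fun_upd_apply)
    moreover have "x c = y c" using h True by blast
    ultimately show ?thesis unfolding pd_def by simp
  next
    case False then show ?thesis using pd_zero[OF assms] by simp
  qed
qed

lemma pd_local_zero:
  assumes "open U" "x \<in> U" "\<And>y. y \<in> U \<Longrightarrow> f y = 0"
  shows "pd b f x = 0"
proof -
  have cont: "continuous_on UNIV (\<lambda>t::real. x(b := t))"
    proof (intro continuous_on_coordinatewise_then_product)
    fix i show "continuous_on UNIV (\<lambda>t::real. (x(b := t)) i)"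
      by (cases "i = b") (simp_all add: continuous_on_const continuous_on_id)
  qed
  have op: "open ((\<lambda>t::real. x(b := t)) -` U \<inter> UNIV)"
    using cont assms(1) continuous_on_open_vimage[of UNIV] by auto
  have mem: "x b \<in> (\<lambda>t::real. x(b := t)) -` U \<inter> UNIV" using assms(2) by simp
  have "((\<lambda>t. f (x(b := t))) has_field_derivative 0) (at (x b))"
    by (rule has_field_derivative_transform_within_open[OF DERIV_const op mem]) (use assms(3) in auto)
  then show ?thesis unfolding pd_def by (rule DERIV_imp_deriv)
qed

lemma lie_fun_eq: fixes y :: "('a::finite) point" shows "depends_on_order 2 L \<Longrightarrow> lie_fun X L y = (\<Sum>c\<in>Fs. pd c L y * X y c)"
  unfolding lie_fun_def contr1_def dfun_def
  by (rule csum_eq[OF finite_Fs]) (auto simp: Fs_def pd_zero)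

lemma contr1_Fs: fixes y :: "('a::finite) point" shows "(\<And>c. c \<notin> Fs \<Longrightarrow> \<omega> y c = 0) \<Longrightarrow> contr1 X \<omega> y = (\<Sum>c\<in>Fs. \<omega> y c * X y c)"
  unfolding contr1_def by (rule csum_eq[OF finite_Fs]) auto

lemma S_vec_eq: fixes y :: "('a::finite) point" shows "c' \<in> Fs \<Longrightarrow> S_vec k X y c' = (\<Sum>c\<in>Fs. Smat k c' c * X y c)"
  unfolding S_vec_def by (rule csum_eq[OF finite_Fs]) (auto simp: Fs_def Smat_def)

lemma S_form_Fs: fixes y :: "('a::finite) point" shows "(\<And>c. c \<notin> Fs \<Longrightarrow> \<omega> y c = 0) \<Longrightarrow> S_form k \<omega> y c = (\<Sum>c'\<in>Fs. \<omega> y c' * Smat k c' c)"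
  unfolding S_form_def by (rule csum_eq[OF finite_Fs]) auto

lemma adjoint:
  assumes "\<And>c. c \<notin> (Fs :: ('a::finite) coord set) \<Longrightarrow> \<omega> y c = 0"
  shows "(\<Sum>c\<in>Fs. S_form k \<omega> y c * X y c) = (\<Sum>c'\<in>Fs. \<omega> y c' * S_vec k X y c')"
proof -
  have "(\<Sum>c\<in>Fs. S_form k \<omega> y c * X y c) = (\<Sum>c\<in>Fs. \<Sum>c'\<in>Fs. \<omega> y c' * Smat k c' c * X y c)"
    by (simp add: S_form_Fs[where \<omega>=\<omega> and y=y, OF assms] sum_distrib_right)
  also have "\<dots> = (\<Sum>c'\<in>Fs. \<Sum>c\<in>Fs. \<omega> y c' * Smat k c' c * X y c)"
    by (rule sum.swap)
  also have "\<dots> = (\<Sum>c'\<in>Fs. \<omega> y c' * S_vec k X y c')"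
    by (rule sum.cong) (simp_all add: S_vec_eq sum_distrib_left mult.assoc)
  finally show ?thesis .
qed

definition om :: "('a point \<Rightarrow> real) \<Rightarrow> nat \<Rightarrow> nat \<Rightarrow> 'a form1" where
  "om L i j = S_form j (S_form i (dfun L))"

lemma om_eq: "om L i j y c = pd (shift i (shift j c)) L y * real (ord c + 2) * real (ord c + 1)"
  unfolding om_def by (simp add: S_form_eq dfun_def)

lemma om_zero: "depends_on_order 2 L \<Longrightarrow> ord c \<noteq> 0 \<Longrightarrow> om L i j y c = 0"
  by (simp add: om_eq pd_zero)

lemma om_sym: "om L i j = om L j i"
  by (intro ext) (simp add: om_eq shift_comm)

lemma dep_mult: "depends_on_order 2 f \<Longrightarrow> depends_on_order 2 (\<lambda>y. f y * k)"
  unfolding depends_on_order_def by metis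

lemma om_dep: "depends_on_order 2 L \<Longrightarrow> depends_on_order 2 (\<lambda>y. om L i j y c)"
  unfolding om_eq using dep_mult[OF dep_mult[OF dep_pd]] by blast

lemma dL_zero: "depends_on_order 2 L \<Longrightarrow> c \<notin> Fs \<Longrightarrow> dfun L y c = 0"
  by (simp add: dfun_def Fs_def pd_zero)

lemma SdL_zero: "depends_on_order 2 L \<Longrightarrow> c \<notin> Fs \<Longrightarrow> S_form i (dfun L) y c = 0"
  by (simp add: S_form_eq dfun_def Fs_def pd_zero)

lemma g_eq:
  assumes "depends_on_order 2 (L :: ('a::finite) point \<Rightarrow> real)"
  shows "contr1 (Tot j) (om L i j) y = lie_fun (Delta2 i j j) L y"
proof -
  have "contr1 (Tot j) (om L i j) y = (\<Sum>c\<in>Fs. S_form j (S_form i (dfun L)) y c * Tot j y c)"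
  proof -
    have "contr1 (Tot j) (om L i j) y = (\<Sum>c\<in>Fs. om L i j y c * Tot j y c)"
    proof (rule contr1_Fs)
      fix c :: "'a coord" assume "c \<notin> Fs"
      then have "ord c \<noteq> 0" by (simp add: Fs_def)
      then show "om L i j y c = 0" by (rule om_zero[OF assms])
    qed
    then show ?thesis by (simp add: om_def)
  qed
  also have "\<dots> = (\<Sum>c'\<in>Fs. S_form i (dfun L) y c' * S_vec j (Tot j) y c')"
    by (rule adjoint) (rule SdL_zero[OF assms])
  also have "\<dots> = (\<Sum>c''\<in>Fs. dfun L y c'' * S_vec i (S_vec j (Tot j)) y c'')"
    by (rule adjoint) (rule dL_zero[OF assms])
  also have "\<dots> = lie_fun (Delta2 i j j) L y"
    by (simp add: lie_fun_eq[OF assms] Delta2_def dfun_def)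
  finally show ?thesis .
qed

lemma delta1_eq:
  assumes "depends_on_order 2 (L :: ('a::finite) point \<Rightarrow> real)"
  shows "(\<Sum>c\<in>Fs. S_form i (dfun L) y c * y (shift i c)) = lie_fun (Delta1 i i) L y"
proof -
  have "(\<Sum>c\<in>Fs. S_form i (dfun L) y c * y (shift i c)) = (\<Sum>c\<in>Fs. S_form i (dfun L) y c * Tot i y c)"
    by (simp add: Tot_def)
  also have "\<dots> = (\<Sum>c'\<in>Fs. dfun L y c' * S_vec i (Tot i) y c')"
    by (rule adjoint) (rule dL_zero[OF assms])
  also have "\<dots> = lie_fun (Delta1 i i) L y"
    by (simp add: lie_fun_eq[OF assms] Delta1_def dfun_def)
  finally show ?thesis .
qed

lemma antisym_double:
  fixes f :: "'b \<Rightarrow> 'b \<Rightarrow> real"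
  assumes "finite A" "\<And>p q. p \<in> A \<Longrightarrow> q \<in> A \<Longrightarrow> f p q = - f q p"
  shows "(\<Sum>p\<in>A. \<Sum>q\<in>A. f p q) = 0"
proof -
  have "(\<Sum>p\<in>A. \<Sum>q\<in>A. f p q) = (\<Sum>q\<in>A. \<Sum>p\<in>A. f p q)" by (rule sum.swap)
  also have "\<dots> = (\<Sum>q\<in>A. \<Sum>p\<in>A. - f q p)"
    by (intro sum.cong refl) (metis assms(2))
  also have "\<dots> = - (\<Sum>q\<in>A. \<Sum>p\<in>A. f q p)" by (simp add: sum_negf)
  finally show ?thesis by simp
qed


lemma prod_sum: "(\<Sum>p\<in>A\<times>B. h (fst p) (snd p)) = (\<Sum>x\<in>A. \<Sum>y\<in>B. h x y)"
  by (simp add: sum.cartesian_product case_prod_unfold)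

theorem proposition1:
  fixes U :: "('a::finite) point set" and L :: "'a point \<Rightarrow> real"
  assumes "second_order_lagrangian U L"
    and "homogeneous_on U L"
  shows "\<forall>x\<in>U. L x = (1/2) * (\<Sum>i\<in>{1,2}. contr1 (Tot i) (hilbert_form L i) x)"
proof
  fix x assume xU: "x \<in> U"
  have opU: "open U" and dep: "depends_on_order 2 L"
    using assms(1) unfolding second_order_lagrangian_def by auto
  have hom1: "\<And>i j y. i \<in> {1,2} \<Longrightarrow> j \<in> {1,2} \<Longrightarrow> y \<in> U \<Longrightarrow>
      lie_fun (Delta1 i j) L y = (if i = j then L y else 0)"
    using assms(2) unfolding homogeneous_on_def by blast
  have hom2: "\<And>i j k y. i \<in> {1,2} \<Longrightarrow> j \<in> {1,2} \<Longrightarrow> k \<in> {1,2} \<Longrightarrow> y \<in> U \<Longrightarrow>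
      lie_fun (Delta2 i k j) L y = 0"
    using assms(2) unfolding homogeneous_on_def by blast
  define P where "P i j a c = pd a (\<lambda>y. om L i j y c) x" for i j a c
  have Psym: "P i j = P j i" for i j unfolding P_def by (simp add: om_sym)
  have Pz1: "P i j a c = 0" if "c \<notin> Fs" for i j a c
  proof -
    have "(\<lambda>y. om L i j y c) = (\<lambda>y. 0)" using that om_zero[OF dep, of c]
      by (auto simp: Fs_def)
    then show ?thesis unfolding P_def by (simp add: pd_const)
  qed
  have Pz2: "P i j c a = 0" if "c \<notin> Fs" for i j a c
    unfolding P_def by (rule pd_zero[OF om_dep[OF dep]]) (use that in \<open>simp add: Fs_def\<close>)
  have hf: "hilbert_form L i x c = S_form i (dfun L) x c
      - 1/2 * (\<Sum>j\<in>{1,2}. \<Sum>a\<in>Fs. x (shift j a) * (P i j a c - P i j c a))"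
    if "i \<in> {1,2}" for i c
  proof -
    have "lie_form (Tot j) (S_form j (S_form i (dfun L))) x c
        = (\<Sum>a\<in>Fs. x (shift j a) * (P i j a c - P i j c a))" if "j \<in> {1,2}" for j
    proof -
      have "dfun (contr1 (Tot j) (om L i j)) x c = 0"
        unfolding dfun_def
        by (rule pd_local_zero[OF opU xU]) (use hom2[of i j j] \<open>i \<in> {1,2}\<close> \<open>j \<in> {1,2}\<close> g_eq[OF dep] in auto)
      moreover have "contr2 (Tot j) (dform1 (om L i j)) x c
          = (\<Sum>a\<in>Fs. x (shift j a) * (P i j a c - P i j c a))"
        unfolding contr2_def dform1_def Tot_def P_def[symmetric]
        by (rule csum_eq[OF finite_Fs]) (simp add: Pz1 Pz2)
      ultimately show ?thesis unfolding lie_form_def om_def by simp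
    qed
    then show ?thesis unfolding hilbert_form_def by simp
  qed
  have hz: "hilbert_form L i x c = 0" if "i \<in> {1,2}" "c \<notin> Fs" for i c
    using that by (simp add: hf SdL_zero[OF dep] Pz1 Pz2)
  have ci: "contr1 (Tot i) (hilbert_form L i) x
      = (\<Sum>c\<in>Fs. S_form i (dfun L) x c * x (shift i c))
        - 1/2 * (\<Sum>c\<in>Fs. x (shift i c) * (\<Sum>j\<in>{1,2}. \<Sum>a\<in>Fs. x (shift j a) * (P i j a c - P i j c a)))"
    if "i \<in> {1,2}" for i
  proof -
    have "contr1 (Tot i) (hilbert_form L i) x = (\<Sum>c\<in>Fs. hilbert_form L i x c * Tot i x c)"
      by (rule contr1_Fs) (rule hz[OF that])
    also have "\<dots> = (\<Sum>c\<in>Fs. S_form i (dfun L) x c * x (shift i c)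
        - 1/2 * (x (shift i c) * (\<Sum>j\<in>{1,2}. \<Sum>a\<in>Fs. x (shift j a) * (P i j a c - P i j c a))))"
      by (rule sum.cong) (simp_all add: hf[OF that] Tot_def algebra_simps)
    finally show ?thesis by (simp add: sum_subtractf sum_distrib_left)
  qed
  define g where "g = (\<lambda>(i::nat) (c::'a coord) (j::nat) (a::'a coord).
      x (shift i c) * (x (shift j a) * (P i j a c - P i j c a)))"
  have Q: "(\<Sum>i\<in>{1::nat,2}. \<Sum>c\<in>Fs. x (shift i c) * (\<Sum>j\<in>{1,2}. \<Sum>a\<in>Fs. x (shift j a) * (P i j a c - P i j c a))) = 0"
  proof -
    have "(\<Sum>i\<in>{1::nat,2}. \<Sum>c\<in>Fs. x (shift i c) * (\<Sum>j\<in>{1,2}. \<Sum>a\<in>Fs. x (shift j a) * (P i j a c - P i j c a)))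
        = (\<Sum>i\<in>{1::nat,2}. \<Sum>c\<in>Fs. \<Sum>j\<in>{1::nat,2}. \<Sum>a\<in>Fs. g i c j a)"
      unfolding g_def by (simp only: sum_distrib_left)
    also have "\<dots> = (\<Sum>p\<in>{1::nat,2} \<times> Fs. \<Sum>j\<in>{1::nat,2}. \<Sum>a\<in>Fs. g (fst p) (snd p) j a)"
      by (rule prod_sum[symmetric])
    also have "\<dots> = (\<Sum>p\<in>{1::nat,2} \<times> Fs. \<Sum>q\<in>{1::nat,2} \<times> Fs. g (fst p) (snd p) (fst q) (snd q))"
      by (rule sum.cong[OF refl]) (rule prod_sum[symmetric])
    also have "\<dots> = 0"
      by (rule antisym_double) (auto simp: g_def finite_Fs Psym[of 2 1] Psym[of 2 "Suc 0"] algebra_simps)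
    finally show ?thesis .
  qed
  have A: "(\<Sum>i\<in>{1::nat,2}. \<Sum>c\<in>Fs. S_form i (dfun L) x c * x (shift i c)) = 2 * L x"
    by (simp add: delta1_eq[OF dep] hom1 xU)
  have "(\<Sum>i\<in>{1::nat,2}. contr1 (Tot i) (hilbert_form L i) x)
      = (\<Sum>i\<in>{1::nat,2}. \<Sum>c\<in>Fs. S_form i (dfun L) x c * x (shift i c))
        - 1/2 * (\<Sum>i\<in>{1::nat,2}. \<Sum>c\<in>Fs. x (shift i c) * (\<Sum>j\<in>{1,2}. \<Sum>a\<in>Fs. x (shift j a) * (P i j a c - P i j c a)))"
  proof -
    have "(\<Sum>i\<in>{1::nat,2}. contr1 (Tot i) (hilbert_form L i) x)
      = (\<Sum>i\<in>{1::nat,2}. (\<Sum>c\<in>Fs. S_form i (dfun L) x c * x (shift i c))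
        - 1/2 * (\<Sum>c\<in>Fs. x (shift i c) * (\<Sum>j\<in>{1,2}. \<Sum>a\<in>Fs. x (shift j a) * (P i j a c - P i j c a))))"
      by (rule sum.cong[OF refl], rule ci, assumption)
    then show ?thesis by (simp only: sum_subtractf sum_distrib_left)
  qed
  then show "L x = (1/2) * (\<Sum>i\<in>{1,2}. contr1 (Tot i) (hilbert_form L i) x)"
    using A Q by simp
qed

end
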